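(* Let $G_l$ be the path graph on $l\ge 2$ vertices $1,2,\ldots,l$ (with $i$ adjacent to $i+1$), and let $W:\{1,\ldots,l\}\to\mathbb{R}$ be a single-basin potential. Let $\gamma$ be the gap between the smallest and second-smallest eigenvalues of $H_{G_l,W}$. Then $$\gamma\ge\frac{1}{2(|W|+2)l^2},\qquad\text{where } |W|=\max_x W(x)-\min_x W(x).$$
   Context: For a finite simple undirected graph $G$ with vertex set $V_G$, let $\mathcal{H}_G$ be the complex Hilbert space with orthonormal basis $\{|x\rangle : x\in V_G\}$. The graph Laplacian is $L_G=\sum_{x} d_x |x\rangle\langle x| - \sum_{x\sim y}|x\rangle\langle y|$, where $d_x$ is the degree of $x$ and the second sum runs over ordered pairs of adjacent vertices. For a potential $W:V_G\to\mathbb{R}$, $H_{G,W}=L_G+\sum_{x} W(x)|x\rangle\langle x|$. A potential $W$ is single-basin if for every real number $E$ the set $\{x\in V_G : W(x)<E\}$ is a connected set of vertices in $G$. *)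

theory Defs
  imports "Jordan_Normal_Form.Char_Poly"
begin

text \<open>Finite simple graphs on the vertex set {0..<n}, given by an adjacency
  relation E (assumed symmetric and irreflexive where relevant).\<close>

definition degree :: "(nat \<Rightarrow> nat \<Rightarrow> bool) \<Rightarrow> nat \<Rightarrow> nat \<Rightarrow> nat" where
  "degree E n x = card {y. y < n \<and> E x y}"

text \<open>Schroedinger operator H = L_G + W on the complex Hilbert space with
  orthonormal basis indexed by the vertices, as an n x n complex matrix.\<close>
definition hamiltonian :: "(nat \<Rightarrow> nat \<Rightarrow> bool) \<Rightarrow> nat \<Rightarrow> (nat \<Rightarrow> real) \<Rightarrow> complex mat" where
  "hamiltonian E n W = mat n n (\<lambda>(i, j).
      (if i = j then complex_of_real (real (degree E n i) + W i) else 0)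
      - (if E i j then 1 else 0))"

text \<open>Path graph on l vertices 0,...,l-1 (vertex i here is vertex i+1 of the paper).\<close>
definition path_adj :: "nat \<Rightarrow> nat \<Rightarrow> bool" where
  "path_adj i j \<longleftrightarrow> i + 1 = j \<or> j + 1 = i"

definition connected_vertex_set :: "(nat \<Rightarrow> nat \<Rightarrow> bool) \<Rightarrow> nat set \<Rightarrow> bool" where
  "connected_vertex_set E S \<longleftrightarrow>
     (\<forall>x\<in>S. \<forall>y\<in>S. (x, y) \<in> {(a, b). a \<in> S \<and> b \<in> S \<and> E a b}\<^sup>*)"

definition single_basin :: "(nat \<Rightarrow> nat \<Rightarrow> bool) \<Rightarrow> nat \<Rightarrow> (nat \<Rightarrow> real) \<Rightarrow> bool" where
  "single_basin E n W \<longleftrightarrow> (\<forall>e::real. connected_vertex_set E {x. x < n \<and> W x < e})"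

definition eig_count :: "complex mat \<Rightarrow> real \<Rightarrow> nat" where
  "eig_count A t = (\<Sum>z \<in> {z. poly (char_poly A) z = 0 \<and> z \<in> \<real> \<and> Re z \<le> t}.
                      order z (char_poly A))"

text \<open>k-th smallest eigenvalue (k \<ge> 1), counted with multiplicity, of a matrix
  with real spectrum (e.g. a Hermitian matrix).\<close>
definition kth_eig :: "complex mat \<Rightarrow> nat \<Rightarrow> real" where
  "kth_eig A k = Inf {t. eig_count A t \<ge> k}"

definition osc :: "nat \<Rightarrow> (nat \<Rightarrow> real) \<Rightarrow> real" where
  "osc n W = Max (W ` {..<n}) - Min (W ` {..<n})"

end

theory Submission
  imports Defs "HOL-Analysis.Elementary_Metric_Spaces"
begin


definition tri :: "nat \<Rightarrow> (nat \<Rightarrow> 'a::comm_ring_1) \<Rightarrow> 'a \<Rightarrow> 'a mat" where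
  "tri k d c = mat k k (\<lambda>(i,j). if i = j then d i else if Suc i = j \<or> Suc j = i then c else 0)"

lemma tri_carrier[simp]: "tri k d c \<in> carrier_mat k k"
  by (simp add: tri_def)

lemma det_tri_SS:
  "det (tri (Suc (Suc k)) d c) = d (Suc k) * det (tri (Suc k) d c) - c * c * det (tri k d c)"
proof -
  let ?A = "tri (Suc (Suc k)) d c"
  have A: "?A \<in> carrier_mat (Suc (Suc k)) (Suc (Suc k))" by simp
  have del1: "mat_delete ?A (Suc k) (Suc k) = tri (Suc k) d c"
    by (rule eq_matI, auto simp: mat_delete_def tri_def)
  let ?M = "mat_delete ?A (Suc k) k"
  have M: "?M \<in> carrier_mat (Suc k) (Suc k)" by (simp add: mat_delete_def tri_def)
  have del2: "mat_delete ?M k k = tri k d c"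
    by (rule eq_matI, auto simp: mat_delete_def tri_def)
  have "det ?M = (\<Sum>i<Suc k. ?M $$ (i,k) * cofactor ?M i k)"
    by (rule laplace_expansion_column[OF M], simp)
  also have "\<dots> = ?M $$ (k,k) * cofactor ?M k k"
  proof -
    have "(\<Sum>i<k. ?M $$ (i,k) * cofactor ?M i k) = 0"
      by (rule sum.neutral, auto simp: mat_delete_def tri_def)
    then show ?thesis by simp
  qed
  also have "\<dots> = c * det (tri k d c)"
  proof -
    have "?M $$ (k,k) = c" by (simp add: mat_delete_def tri_def)
    then show ?thesis by (simp add: cofactor_def del2 flip: mult_2)
  qed
  finally have dM: "det ?M = c * det (tri k d c)" .
  have "det ?A = (\<Sum>j<Suc (Suc k). ?A $$ (Suc k,j) * cofactor ?A (Suc k) j)"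
    by (rule laplace_expansion_row[OF A], simp)
  also have "\<dots> = (\<Sum>j<k. ?A $$ (Suc k,j) * cofactor ?A (Suc k) j)
       + ?A $$ (Suc k,k) * cofactor ?A (Suc k) k + ?A $$ (Suc k,Suc k) * cofactor ?A (Suc k) (Suc k)"
    by simp
  also have "(\<Sum>j<k. ?A $$ (Suc k,j) * cofactor ?A (Suc k) j) = 0"
    by (rule sum.neutral, auto simp: tri_def)
  also have "cofactor ?A (Suc k) k = - det ?M"
    by (simp add: cofactor_def)
  also have "cofactor ?A (Suc k) (Suc k) = det (tri (Suc k) d c)"
    by (simp add: cofactor_def del1 flip: mult_2)
  also have "?A $$ (Suc k,k) = c" by (simp add: tri_def)
  also have "?A $$ (Suc k,Suc k) = d (Suc k)" by (simp add: tri_def)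
  finally show ?thesis by (simp add: dM algebra_simps)
qed



fun yq :: "(nat \<Rightarrow> real) \<Rightarrow> real \<Rightarrow> nat \<Rightarrow> real" where
  "yq a x 0 = 1"
| "yq a x (Suc 0) = a 0 - x"
| "yq a x (Suc (Suc k)) = (a (Suc k) - x) * yq a x (Suc k) - yq a x k"

fun Pp :: "(nat \<Rightarrow> real) \<Rightarrow> nat \<Rightarrow> complex poly" where
  "Pp a 0 = 1"
| "Pp a (Suc 0) = [:- of_real (a 0), 1:]"
| "Pp a (Suc (Suc k)) = [:- of_real (a (Suc k)), 1:] * Pp a (Suc k) - Pp a k"

lemma det_tri_Pp: "det (tri k (\<lambda>i. [:- of_real (a i), 1:]) 1) = Pp a k"
proof (induction a k rule: Pp.induct)
  case (1 a) then show ?case by (simp add: tri_def)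
next
  case (2 a) then show ?case by (subst det_single[of _], auto simp: tri_def)
next
  case (3 a k) then show ?case by (simp add: det_tri_SS)
qed

lemma poly_Pp: "poly (Pp a k) (of_real x) = of_real ((-1)^k * yq a x k)"
  by (induction a k rule: Pp.induct) (auto simp: algebra_simps)

lemma CD_Pp: "pderiv (Pp a (Suc k)) * Pp a k - Pp a (Suc k) * pderiv (Pp a k) = (\<Sum>j\<le>k. Pp a j ^ 2)"
proof (induction k)
  case 0 then show ?case by (simp add: pderiv_pCons)
next
  case (Suc k)
  define L where "L = [:- complex_of_real (a (Suc k)), 1:]"
  have dL: "pderiv L = 1" by (simp add: L_def pderiv_pCons)
  have P2: "Pp a (Suc (Suc k)) = L * Pp a (Suc k) - Pp a k" by (simp add: L_def)
  have d: "pderiv (Pp a (Suc (Suc k))) = Pp a (Suc k) + L * pderiv (Pp a (Suc k)) - pderiv (Pp a k)"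
    unfolding P2 by (simp add: pderiv_diff pderiv_mult dL algebra_simps)
  have "pderiv (Pp a (Suc (Suc k))) * Pp a (Suc k) - Pp a (Suc (Suc k)) * pderiv (Pp a (Suc k))
     = Pp a (Suc k) ^ 2 + (pderiv (Pp a (Suc k)) * Pp a k - Pp a (Suc k) * pderiv (Pp a k))"
  proof -
    have e1: "pderiv (Pp a (Suc (Suc k))) * Pp a (Suc k) = (Pp a (Suc k) + L * pderiv (Pp a (Suc k)) - pderiv (Pp a k)) * Pp a (Suc k)"
      using d by (simp del: Pp.simps)
    have e2: "Pp a (Suc (Suc k)) * pderiv (Pp a (Suc k)) = (L * Pp a (Suc k) - Pp a k) * pderiv (Pp a (Suc k))"
      using P2 by (simp del: Pp.simps)
    show ?thesis unfolding e1 e2 by (simp del: Pp.simps add: algebra_simps power2_eq_square)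
  qed
  also note Suc.IH
  finally show ?case by (simp add: add.commute)
qed

lemma order_Pp_real:
  assumes "n \<ge> 1" "yq a x n = 0"
  shows "order (of_real x) (Pp a n) = 1"
proof -
  obtain k where n: "n = Suc k" using assms(1) by (cases n) auto
  let ?z = "complex_of_real x"
  have r: "poly (Pp a n) ?z = 0" using assms poly_Pp[of a n x] by simp
  have "poly (pderiv (Pp a (Suc k)) * Pp a k - Pp a (Suc k) * pderiv (Pp a k)) ?z
      = poly (\<Sum>j\<le>k. Pp a j ^ 2) ?z" by (simp only: CD_Pp)
  hence eq: "poly (pderiv (Pp a n)) ?z * poly (Pp a k) ?z = (\<Sum>j\<le>k. poly (Pp a j) ?z ^ 2)"
    using r n by (simp add: poly_sum)
  define S where "S = (\<Sum>j\<le>k. (yq a x j)^2)"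
  have s: "(\<Sum>j\<le>k. poly (Pp a j) ?z ^ 2) = of_real S"
  proof -
    have "((-1::complex)^j)^2 = 1" for j by (induct j) auto
    then show ?thesis by (simp add: poly_Pp power_mult_distrib S_def)
  qed
  have "S \<ge> (\<Sum>j\<in>{0}. (yq a x j)^2)" unfolding S_def
    by (rule sum_mono2) auto
  hence "S \<noteq> 0" by simp
  hence "(\<Sum>j\<le>k. poly (Pp a j) ?z ^ 2) \<noteq> 0" unfolding s by simp
  with eq have d: "poly (pderiv (Pp a n)) ?z \<noteq> 0" by auto
  have nz: "Pp a n \<noteq> 0" using d by auto
  show ?thesis using order_pderiv[OF nz r] order_0I[OF d] by simp
qed



lemma yq_cont: "isCont (\<lambda>x. yq a x k) x0"
  by (induction a "x0" k rule: yq.induct) (auto intro!: continuous_intros)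

lemma yq_big:
  assumes "\<forall>k<n. a k - x \<ge> 2" "k < n"
  shows "1 \<le> yq a x k \<and> yq a x k \<le> yq a x (Suc k)"
  using assms(2)
proof (induction k)
  case 0 then show ?case using assms(1) by auto
next
  case (Suc k)
  then have ih: "1 \<le> yq a x k" "yq a x k \<le> yq a x (Suc k)" by auto
  have "a (Suc k) - x \<ge> 2" using assms(1) Suc.prems by auto
  hence "(a (Suc k) - x) * yq a x (Suc k) \<ge> 2 * yq a x (Suc k)"
    using ih by (intro mult_right_mono) auto
  moreover have "yq a x (Suc (Suc k)) = (a (Suc k) - x) * yq a x (Suc k) - yq a x k" by simp
  ultimately show ?case using ih by linarith
qed

lemma nonneg_left:
  fixes f :: "real \<Rightarrow> real"
  assumes c: "isCont f c" and pos: "\<forall>x<c. f x > (0::real)"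
  shows "f c \<ge> 0"
proof (rule ccontr)
  assume "\<not> f c \<ge> 0"
  hence neg: "f c < 0" by simp
  from c[unfolded isCont_def LIM_eq] neg obtain d where d: "d > 0"
    and h: "\<forall>x. x \<noteq> c \<and> norm (x - c) < d \<longrightarrow> norm (f x - f c) < - f c"
    by (meson neg_0_less_iff_less)
  have "c - d/2 \<noteq> c \<and> norm (c - d/2 - c) < d" using d by simp
  with h have "norm (f (c - d/2) - f c) < - f c" by blast
  hence "f (c - d/2) < 0" by (simp add: abs_less_iff)
  moreover have "f (c - d/2) > 0" using pos d by simp
  ultimately show False by simp
qed

lemma ground:
  assumes n: "n \<ge> 1"
  shows "\<exists>l. yq a l n = 0 \<and> (\<forall>x<l. yq a x n > 0) \<and> (\<forall>k<n. yq a l k > 0)"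
proof -
  define S where "S = {x. \<exists>k\<le>n. yq a x k \<le> 0}"
  define m0 where "m0 = Min (a ` {..<n}) - 2"
  have low: "yq a x k \<ge> 1" if "x \<le> m0" "k \<le> n" for x k
  proof -
    have "\<forall>k<n. a k - x \<ge> 2"
    proof (intro allI impI)
      fix k assume "k < n"
      hence "Min (a ` {..<n}) \<le> a k" by (intro Min_le) auto
      then show "a k - x \<ge> 2" using that(1) unfolding m0_def by simp
    qed
    note yb = yq_big[OF this]
    show ?thesis
    proof (cases "k < n")
      case True then show ?thesis using yb by blast
    next
      case False
      obtain m where m: "n = Suc m" using n by (cases n) auto
      have "k = Suc m" using False that m by simp
      moreover have "1 \<le> yq a x m \<and> yq a x m \<le> yq a x (Suc m)" using yb m by simp
      ultimately show ?thesis by simp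
    qed
  qed
  have a0S: "a 0 \<in> S" unfolding S_def using n by (intro CollectI exI[of _ 1]) auto
  have bdd: "bdd_below S"
  proof (rule bdd_belowI[of _ m0])
    fix x assume "x \<in> S"
    then obtain k where "k \<le> n" "yq a x k \<le> 0" unfolding S_def by auto
    then show "m0 \<le> x" using low[of x k] by force
  qed
  have cl: "closed S"
  proof -
    have "S = (\<Union>k\<in>{..n}. {x. yq a x k \<le> 0})" unfolding S_def by auto
    moreover have "closed {x. yq a x k \<le> 0}" for k
      by (rule closed_Collect_le) (auto intro!: continuous_at_imp_continuous_on yq_cont)
    ultimately show ?thesis by auto
  qed
  define l where "l = Inf S"
  have lS: "l \<in> S" unfolding l_def using closed_contains_Inf[OF _ bdd cl] a0S by blast
  have below: "yq a x k > 0" if "x < l" "k \<le> n" for x k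
  proof (rule ccontr)
    assume "\<not> yq a x k > 0"
    hence "x \<in> S" unfolding S_def using that by force
    hence "l \<le> x" unfolding l_def using bdd by (rule cInf_lower)
    with that show False by simp
  qed
  have nonneg: "yq a l k \<ge> 0" if "k \<le> n" for k
    by (rule nonneg_left[OF yq_cont]) (use below that in blast)
  define k0 where "k0 = (LEAST k. k \<le> n \<and> yq a l k \<le> 0)"
  have ex: "\<exists>k. k \<le> n \<and> yq a l k \<le> 0" using lS unfolding S_def by auto
  have k0: "k0 \<le> n" "yq a l k0 \<le> 0" using LeastI_ex[OF ex] unfolding k0_def by auto
  have k0min: "yq a l k > 0" if "k < k0" for k
  proof -
    have "\<not> (k \<le> n \<and> yq a l k \<le> 0)" using not_less_Least[OF that[unfolded k0_def]] .
    then show ?thesis using that k0 by auto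
  qed
  have k0z: "yq a l k0 = 0" using k0 nonneg by (simp add: order.antisym)
  have "k0 = n"
  proof (rule ccontr)
    assume "k0 \<noteq> n"
    hence lt: "k0 < n" using k0 by simp
    have "k0 \<noteq> 0" using k0z by (cases k0) auto
    then obtain j where j: "k0 = Suc j" by (cases k0) auto
    have "yq a l (Suc k0) = - yq a l j" using k0z j by simp
    moreover have "yq a l j > 0" using k0min j by simp
    moreover have "yq a l (Suc k0) \<ge> 0" using nonneg lt by simp
    ultimately show False by simp
  qed
  then show ?thesis using k0z k0min below by (intro exI[of _ l]) auto
qed

lemma yq_reflect: "yq (\<lambda>i. - a i) (- x) k = (-1)^k * yq a x k"
  by (induction a x k rule: yq.induct) (auto simp: algebra_simps)



locale gapctx =
  fixes n :: nat and a W :: "nat \<Rightarrow> real" and lam mu :: real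
  assumes n2: "n \<ge> 2"
    and adef: "\<And>i. i < n \<Longrightarrow> a i = (if i = 0 \<or> i = n - 1 then 1 else 2) + W i"
    and intv: "\<And>i j k. i \<le> j \<Longrightarrow> j \<le> k \<Longrightarrow> k < n \<Longrightarrow> W i < lam \<Longrightarrow> W k < lam \<Longrightarrow> W j < lam"
    and uroot: "yq a lam n = 0" and upos: "\<And>k. k < n \<Longrightarrow> yq a lam k > 0"
    and vroot: "yq a mu n = 0" and lm: "lam < mu"
begin

abbreviation "u \<equiv> yq a lam"
abbreviation "v \<equiv> yq a mu"

definition D :: "nat \<Rightarrow> real" where
  "D k = (if k = 0 \<or> k \<ge> n then 0 else u k - u (k - 1))"

lemma D_step: assumes "k < n" shows "D (Suc k) - D k = (W k - lam) * u k"
proof -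
  consider "k = 0" | "0 < k \<and> k < n - 1" | "k = n - 1 \<and> k > 0" using assms n2 by linarith
  then show ?thesis
  proof cases
    case 1
    then show ?thesis using n2 adef[of 0] by (simp add: D_def algebra_simps)
  next
    case 2
    then obtain j where j: "k = Suc j" by (cases k) auto
    have "u (Suc k) = (a k - lam) * u k - u j" using j by simp
    moreover have "\<not> n \<le> Suc (Suc j)" "\<not> n \<le> Suc j" "a k = 2 + W k" using 2 j adef[of k] by auto
    ultimately show ?thesis using j by (simp add: D_def algebra_simps)
  next
    case 3
    then obtain j where j: "k = Suc j" by (metis gr0_implies_Suc)
    have nk: "n = Suc k" using 3 n2 by simp
    have "u (Suc k) = (a k - lam) * u k - u j" using j by simp
    with uroot nk have "u j = (a k - lam) * u k" by simp
    moreover have "a k = 1 + W k" "k \<noteq> 0" using 3 adef[of k] by auto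
    moreover have "D (Suc k) = 0" unfolding D_def using nk by simp
    moreover have "D k = u k - u j" unfolding D_def using nk j by simp
    ultimately show ?thesis using j by (simp add: algebra_simps)
  qed
qed

lemma D_tele: assumes "s \<le> e" "e \<le> n"
  shows "D e - D s = (\<Sum>t=s..<e. (W t - lam) * u t)"
proof -
  have "(\<Sum>t=s..<e. (W t - lam) * u t) = (\<Sum>t=s..<e. D (Suc t) - D t)"
    by (rule sum.cong) (use assms D_step in auto)
  also have "\<dots> = D e - D s" by (rule sum_Suc_diff'[OF assms(1)])
  finally show ?thesis by simp
qed

lemma D0: "D 0 = 0" and Dn: "D n = 0" by (auto simp: D_def)

lemma exists_neg:
  assumes "s \<le> e" "e \<le> n" "D e < D s"
  shows "\<exists>t. s \<le> t \<and> t < e \<and> W t < lam"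
proof (rule ccontr)
  assume na: "\<not> ?thesis"
  have "\<forall>t\<in>{s..<e}. (W t - lam) * u t \<ge> 0"
  proof
    fix t assume t: "t \<in> {s..<e}"
    then have "W t \<ge> lam" using na by auto
    moreover have "u t > 0" using upos t assms(2) by auto
    ultimately show "(W t - lam) * u t \<ge> 0" by simp
  qed
  hence "(\<Sum>t=s..<e. (W t - lam) * u t) \<ge> 0" by (intro sum_nonneg) auto
  with D_tele[OF assms(1,2)] assms(3) show False by simp
qed

lemma no_switch:
  assumes "i < j" "j \<le> n" "D i < 0"
  shows "D j \<le> 0"
proof (rule ccontr)
  assume "\<not> D j \<le> 0"
  hence pj: "D j > 0" by simp
  obtain t1 where t1: "t1 < i" "W t1 < lam" using exists_neg[of 0 i] assms D0 by auto
  obtain t2 where t2: "j \<le> t2" "t2 < n" "W t2 < lam" using exists_neg[of j n] assms Dn pj by auto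
  have "\<forall>t\<in>{i..<j}. (W t - lam) * u t \<le> 0"
  proof
    fix t assume t: "t \<in> {i..<j}"
    have "W t < lam" by (rule intv[of t1 t t2]) (use t t1 t2 in auto)
    moreover have "u t > 0" using upos t t2 by auto
    ultimately show "(W t - lam) * u t \<le> 0" by (simp add: mult_nonpos_nonneg)
  qed
  hence "(\<Sum>t=i..<j. (W t - lam) * u t) \<le> 0" by (intro sum_nonpos) auto
  with D_tele[of i j] assms pj show False by simp
qed

lemma mono_up: assumes "s \<le> e" "e < n" "\<And>k. s < k \<Longrightarrow> k \<le> e \<Longrightarrow> D k \<ge> 0"
  shows "u s \<le> u e"
  using assms
proof (induction e)
  case 0 then show ?case by simp
next
  case (Suc e)
  show ?case
  proof (cases "s = Suc e")
    case True then show ?thesis by simp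
  next
    case False
    hence "u s \<le> u e" using Suc by auto
    moreover have "D (Suc e) \<ge> 0" using Suc False by auto
    ultimately show ?thesis using Suc.prems by (simp add: D_def split: if_splits)
  qed
qed

lemma mono_down: assumes "s \<le> e" "e < n" "\<And>k. s < k \<Longrightarrow> k \<le> e \<Longrightarrow> D k \<le> 0"
  shows "u e \<le> u s"
  using assms
proof (induction e)
  case 0 then show ?case by simp
next
  case (Suc e)
  show ?case
  proof (cases "s = Suc e")
    case True then show ?thesis by simp
  next
    case False
    hence "u e \<le> u s" using Suc by auto
    moreover have "D (Suc e) \<le> 0" using Suc False by auto
    ultimately show ?thesis using Suc.prems by (simp add: D_def split: if_splits)
  qed
qed

lemma unimodal_edge:
  assumes e: "Suc e < n"
  shows "(\<forall>j\<le>e. u j \<le> u e \<and> u j \<le> u (Suc e)) \<or>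
         (\<forall>j. e < j \<longrightarrow> j < n \<longrightarrow> u j \<le> u (Suc e) \<and> u j \<le> u e)"
proof (cases "\<forall>k. 0 < k \<longrightarrow> k \<le> Suc e \<longrightarrow> D k \<ge> 0")
  case True
  have "u j \<le> u e \<and> u j \<le> u (Suc e)" if j: "j \<le> e" for j
  proof -
    have "u j \<le> u e"
    proof (rule mono_up)
      show "j \<le> e" "e < n" using j e by auto
      show "D k \<ge> 0" if "j < k" "k \<le> e" for k using True that by simp
    qed
    moreover have "u e \<le> u (Suc e)"
    proof (rule mono_up)
      show "e \<le> Suc e" "Suc e < n" using e by auto
      show "D k \<ge> 0" if "e < k" "k \<le> Suc e" for k using True that by simp
    qed
    ultimately show ?thesis by simp
  qed
  then show ?thesis by blast
next
  case False
  then obtain i where i: "0 < i" "i \<le> Suc e" "D i < 0" by (meson not_le)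
  have neg: "D k \<le> 0" if "i \<le> k" "k \<le> n" for k
  proof (cases "i = k")
    case True then show ?thesis using i by simp
  next
    case False then show ?thesis using no_switch[of i k] i that by simp
  qed
  have "u j \<le> u (Suc e) \<and> u j \<le> u e" if j: "e < j" "j < n" for j
  proof -
    have "u j \<le> u (Suc e)"
    proof (rule mono_down)
      show "Suc e \<le> j" "j < n" using j by auto
      show "D k \<le> 0" if "Suc e < k" "k \<le> j" for k using neg[of k] that i j by simp
    qed
    moreover have "u (Suc e) \<le> u e"
    proof (rule mono_down)
      show "e \<le> Suc e" "Suc e < n" using e by auto
      show "D k \<le> 0" if "e < k" "k \<le> Suc e" for k using neg[of k] that i e by simp
    qed
    ultimately show ?thesis by simp
  qed
  then show ?thesis by blast
qed

lemma wronski: "u k * v (Suc k) - u (Suc k) * v k = (lam - mu) * (\<Sum>j\<le>k. u j * v j)"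
proof (induction k)
  case 0 then show ?case by (simp add: algebra_simps)
next
  case (Suc k)
  have "u (Suc k) * v (Suc (Suc k)) - u (Suc (Suc k)) * v (Suc k)
      = (lam - mu) * (u (Suc k) * v (Suc k)) + (u k * v (Suc k) - u (Suc k) * v k)"
    by (simp add: algebra_simps)
  also note Suc.IH
  finally show ?case by (simp add: algebra_simps)
qed

lemma orth: "(\<Sum>j<n. u j * v j) = 0"
proof -
  obtain m where m: "n = Suc m" using n2 by (cases n) auto
  have "u m * v (Suc m) - u (Suc m) * v m = 0" using uroot vroot m by simp
  with wronski[of m] lm have "(\<Sum>j\<le>m. u j * v j) = 0" by simp
  then show ?thesis using m lessThan_Suc_atMost by simp
qed

end



context gapctx begin

lemma Sbound:
  assumes e: "Suc e < n" and hv: "\<And>j. j < n \<Longrightarrow> \<bar>v j\<bar> \<le> F * u j" and F: "F \<ge> 0"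
  shows "\<bar>\<Sum>j\<le>e. u j * v j\<bar> \<le> F * n * (u e * u (Suc e))"
proof -
  let ?P = "u e * u (Suc e)"
  have uP: "u e > 0" "u (Suc e) > 0" using upos e by auto
  have trm: "\<bar>u j * v j\<bar> \<le> F * ?P" if j: "j < n" "u j \<le> u e" "u j \<le> u (Suc e)" for j
  proof -
    have uj: "u j > 0" using upos j by auto
    have "\<bar>u j * v j\<bar> = u j * \<bar>v j\<bar>" using uj by (simp add: abs_mult)
    also have "\<dots> \<le> u j * (F * u j)" using hv[OF j(1)] uj by (intro mult_left_mono) auto
    also have "\<dots> = F * (u j * u j)" by simp
    also have "\<dots> \<le> F * ?P" using F j uj by (intro mult_left_mono mult_mono) auto
    finally show ?thesis .
  qed
  from unimodal_edge[OF e] show ?thesis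
  proof
    assume L: "\<forall>j\<le>e. u j \<le> u e \<and> u j \<le> u (Suc e)"
    have "\<bar>\<Sum>j\<le>e. u j * v j\<bar> \<le> (\<Sum>j\<le>e. \<bar>u j * v j\<bar>)" by (rule sum_abs)
    also have "\<dots> \<le> (\<Sum>j\<le>e. F * ?P)" using L e by (intro sum_mono trm) auto
    also have "\<dots> = real (Suc e) * (F * ?P)" by simp
    also have "\<dots> \<le> real n * (F * ?P)" using e F uP by (intro mult_right_mono) auto
    finally show ?thesis by (simp add: algebra_simps)
  next
    assume R: "\<forall>j. e < j \<longrightarrow> j < n \<longrightarrow> u j \<le> u (Suc e) \<and> u j \<le> u e"
    have split: "(\<Sum>j=0..<Suc e. u j * v j) + (\<Sum>j=Suc e..<n. u j * v j) = (\<Sum>j=0..<n. u j * v j)"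
      using e by (intro sum.atLeastLessThan_concat) auto
    have "(\<Sum>j=0..<n. u j * v j) = 0" using orth by (simp add: atLeast0LessThan)
    with split have eq: "(\<Sum>j\<le>e. u j * v j) = - (\<Sum>j=Suc e..<n. u j * v j)"
      by (simp add: atLeast0LessThan lessThan_Suc_atMost)
    have "\<bar>\<Sum>j=Suc e..<n. u j * v j\<bar> \<le> (\<Sum>j=Suc e..<n. \<bar>u j * v j\<bar>)" by (rule sum_abs)
    also have "\<dots> \<le> (\<Sum>j=Suc e..<n. F * ?P)" using R by (intro sum_mono trm) auto
    also have "\<dots> = real (n - Suc e) * (F * ?P)" by simp
    also have "\<dots> \<le> real n * (F * ?P)" using e F uP by (intro mult_right_mono) auto
    finally show ?thesis unfolding eq by (simp add: algebra_simps)
  qed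
qed

lemma abs_le_diff: "(x::real) * y \<le> 0 \<Longrightarrow> \<bar>x\<bar> \<le> \<bar>x - y\<bar>"
  using mult_le_0_iff[of x y] by auto

lemma gap: "mu - lam \<ge> 1 / (real n)^2"
proof -
  define g where "g = mu - lam"
  have g: "g > 0" using lm g_def by simp
  define f where "f j = v j / u j" for j
  define F where "F = Max ((\<lambda>j. \<bar>f j\<bar>) ` {..<n})"
  have n0: "0 < n" using n2 by simp
  have fin: "finite ((\<lambda>j. \<bar>f j\<bar>) ` {..<n})" "(\<lambda>j. \<bar>f j\<bar>) ` {..<n} \<noteq> {}" using n0 by auto
  have Fge: "\<bar>f j\<bar> \<le> F" if "j < n" for j unfolding F_def using fin that by (intro Max_ge) auto
  have F1: "F \<ge> 1" using Fge[OF n0] by (simp add: f_def)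
  have hv: "\<bar>v j\<bar> \<le> F * u j" if j: "j < n" for j
  proof -
    have uj: "u j > 0" using upos j by simp
    have "\<bar>v j\<bar> = \<bar>f j\<bar> * u j" using uj by (simp add: f_def abs_div)
    also have "\<dots> \<le> F * u j" using Fge[OF j] uj by (intro mult_right_mono) auto
    finally show ?thesis .
  qed
  obtain js where js: "js < n" "\<bar>f js\<bar> = F"
    using Max_in[OF fin] unfolding F_def by auto
  have uv: "u j * v j = (u j)^2 * f j" if "j < n" for j
    using upos[OF that] by (simp add: f_def power2_eq_square)
  obtain jo where jo: "jo < n" "f jo * f js \<le> 0"
  proof (rule ccontr)
    assume "\<not> thesis"
    with that have pos: "\<forall>j<n. f j * f js > 0" by (meson not_le)
    have "(\<Sum>j<n. u j * v j) * f js = (\<Sum>j<n. (u j)^2 * (f j * f js))"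
      by (simp add: sum_distrib_right uv algebra_simps sum_distrib_left)
    also have "\<dots> > 0"
    proof (rule sum_pos)
      fix i assume i: "i \<in> {..<n}"
      have "(u i)^2 > 0" using upos[of i] i by simp
      moreover have "f i * f js > 0" using pos i by simp
      ultimately show "(u i)^2 * (f i * f js) > 0" by (rule mult_pos_pos)
    qed (use n0 in auto)
    finally show False using orth by simp
  qed
  define T where "T = (\<Sum>e<n-1. \<bar>f (Suc e) - f e\<bar>)"
  have dbound: "\<bar>f (Suc e) - f e\<bar> \<le> g * F * n" if e: "e < n - 1" for e
  proof -
    have e': "Suc e < n" using e by simp
    have u1: "u e > 0" "u (Suc e) > 0" using upos e' by auto
    have "f (Suc e) - f e = (u e * v (Suc e) - u (Suc e) * v e) / (u e * u (Suc e))"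
      using u1 by (simp add: f_def field_simps)
    also have "\<dots> = - g * (\<Sum>j\<le>e. u j * v j) / (u e * u (Suc e))"
      unfolding wronski g_def by simp
    finally have "\<bar>f (Suc e) - f e\<bar> = g * \<bar>\<Sum>j\<le>e. u j * v j\<bar> / (u e * u (Suc e))"
      using g u1 by (simp add: abs_mult abs_div)
    also have "\<dots> \<le> g * (F * n * (u e * u (Suc e))) / (u e * u (Suc e))"
      using Sbound[OF e' hv] F1 g u1 by (intro divide_right_mono mult_left_mono) auto
    also have "\<dots> = g * F * n" using u1 by simp
    finally show ?thesis .
  qed
  have tele: "\<bar>f b - f a\<bar> \<le> T" if ab: "a \<le> b" "b < n" for a b
  proof -
    have "f b - f a = (\<Sum>e=a..<b. f (Suc e) - f e)" using sum_Suc_diff'[OF ab(1), of f] by simp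
    hence "\<bar>f b - f a\<bar> \<le> (\<Sum>e=a..<b. \<bar>f (Suc e) - f e\<bar>)" using sum_abs by metis
    also have "\<dots> \<le> T" unfolding T_def using ab by (intro sum_mono2) auto
    finally show ?thesis .
  qed
  have "F \<le> \<bar>f js - f jo\<bar>" using abs_le_diff[of "f js" "f jo"] jo js by (simp add: mult.commute)
  also have "\<dots> \<le> T"
  proof (cases "jo \<le> js")
    case True then show ?thesis using tele[of jo js] js by simp
  next
    case False then show ?thesis using tele[of js jo] jo by (simp add: abs_minus_commute)
  qed
  also have "T \<le> (\<Sum>e<n-1. g * F * n)" unfolding T_def by (intro sum_mono dbound) auto
  also have "\<dots> = real (n - 1) * (g * F * n)" by simp
  also have "\<dots> \<le> real n * (g * F * n)" using g F1 by (intro mult_right_mono) auto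
  finally have "F * 1 \<le> F * (g * (real n)^2)" by (simp add: power2_eq_square algebra_simps)
  hence "1 \<le> g * (real n)^2" using F1 by (subst (asm) mult_le_cancel_left_pos) auto
  then show ?thesis unfolding g_def using n0 by (simp add: field_simps)
qed

end



lemma degree_path:
  assumes "2 \<le> n" "i < n"
  shows "degree path_adj n i = (if i = 0 \<or> i = n - 1 then 1 else 2)"
proof -
  consider "i = 0" | "i = n - 1" "i > 0" | "0 < i" "i < n - 1" using assms by linarith
  then show ?thesis
  proof cases
    case 1
    hence "{y. y < n \<and> path_adj i y} = {1}" using assms by (auto simp: path_adj_def)
    then show ?thesis using 1 by (simp add: degree_def)
  next
    case 2
    hence "{y. y < n \<and> path_adj i y} = {i - 1}" using assms by (auto simp: path_adj_def)
    then show ?thesis using 2 by (simp add: degree_def)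
  next
    case 3
    hence "{y. y < n \<and> path_adj i y} = {i - 1, i + 1}" using assms by (auto simp: path_adj_def)
    then show ?thesis using 3 by (simp add: degree_def)
  qed
qed

lemma rt_between:
  assumes "(x, y) \<in> {(a, b). a \<in> S \<and> b \<in> S \<and> path_adj a b}\<^sup>*" "x \<in> S"
  shows "\<forall>j. min x y \<le> j \<longrightarrow> j \<le> max x y \<longrightarrow> j \<in> S"
  using assms(1)
proof (induction rule: rtrancl_induct)
  case base then show ?case using assms(2) by auto
next
  case (step y z)
  then have z: "z \<in> S" "z = y + 1 \<or> y = z + 1" by (auto simp: path_adj_def)
  show ?case
  proof (intro allI impI)
    fix j assume j: "min x z \<le> j" "j \<le> max x z"
    show "j \<in> S"
    proof (cases "j = z")
      case True then show ?thesis using z by simp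
    next
      case False
      hence "min x y \<le> j \<and> j \<le> max x y" using j z(2) by auto
      then show ?thesis using step.IH by blast
    qed
  qed
qed

lemma char_poly_H:
  "char_poly (hamiltonian path_adj l W) = Pp (\<lambda>i. real (degree path_adj l i) + W i) l"
proof -
  have "char_poly_matrix (hamiltonian path_adj l W)
      = tri l (\<lambda>i. [:- of_real (real (degree path_adj l i) + W i), 1:]) 1"
    by (rule eq_matI) (auto simp: char_poly_matrix_def hamiltonian_def tri_def path_adj_def one_pCons)
  then show ?thesis unfolding char_poly_def by (simp only: det_tri_Pp)
qed



theorem proposition6:
  fixes l :: nat and W :: "nat \<Rightarrow> real"
  assumes "l \<ge> 2"
    and "single_basin path_adj l W"
  shows "kth_eig (hamiltonian path_adj l W) 2 - kth_eig (hamiltonian path_adj l W) 1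
           \<ge> 1 / (2 * (osc l W + 2) * (real l)\<^sup>2)"
proof -
  note l2 = assms(1)
  define a where "a i = real (degree path_adj l i) + W i" for i
  define H where "H = hamiltonian path_adj l W"
  define cp where "cp = char_poly H"
  have cpP: "cp = Pp a l" unfolding cp_def H_def a_def by (rule char_poly_H)
  have polycp: "poly cp (of_real x) = of_real ((-1)^l * yq a x l)" for x
    unfolding cpP by (rule poly_Pp)
  have root_iff: "poly cp (of_real x) = 0 \<longleftrightarrow> yq a x l = 0" for x
    unfolding polycp by simp
  have adef: "a i = (if i = 0 \<or> i = l - 1 then 1 else 2) + W i" if "i < l" for i
    unfolding a_def using degree_path[OF l2 that] by simp
  obtain lam where lam: "yq a lam l = 0" "\<forall>x<lam. yq a x l > 0" "\<forall>k<l. yq a lam k > 0"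
    using ground[of l a] l2 by auto
  obtain nu where nu: "yq (\<lambda>i. - a i) nu l = 0" "\<forall>k<l. yq (\<lambda>i. - a i) nu k > 0"
    using ground[of l "\<lambda>i. - a i"] l2 by auto
  define beta where "beta = - nu"
  have refl: "yq (\<lambda>i. - a i) nu k = (-1)^k * yq a beta k" for k
    using yq_reflect[of a beta k] unfolding beta_def by simp
  have broot: "yq a beta l = 0" using nu(1) refl[of l] by simp
  have h1: "0 < yq (\<lambda>i. - a i) nu 1" using nu(2) l2 by (simp del: yq.simps)
  have "yq a beta 1 < 0" using h1 refl[of 1] by (simp del: yq.simps)
  moreover have "yq a lam 1 > 0" using lam(3) l2 by (simp del: yq.simps)
  ultimately have bl: "beta \<noteq> lam" by auto
  have root_ge: "x \<ge> lam" if "yq a x l = 0" for x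
    using lam(2) that by (metis less_irrefl not_le)
  have lb: "lam < beta" using root_ge[OF broot] bl by simp
  have intv: "W j < lam" if "i \<le> j" "j \<le> k" "k < l" "W i < lam" "W k < lam" for i j k
  proof -
    let ?S = "{x. x < l \<and> W x < lam}"
    have "connected_vertex_set path_adj ?S" using assms(2) unfolding single_basin_def by blast
    hence "(i, k) \<in> {(a, b). a \<in> ?S \<and> b \<in> ?S \<and> path_adj a b}\<^sup>*"
      unfolding connected_vertex_set_def using that by auto
    from rt_between[OF this] have "j \<in> ?S" using that by auto
    then show ?thesis by simp
  qed
  have gapr: "mu - lam \<ge> 1 / (real l)^2" if "yq a mu l = 0" "mu \<noteq> lam" for mu
  proof -
    have "lam < mu" using root_ge[OF that(1)] that(2) by simp
    then interpret gapctx l a W lam mu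
      using l2 adef intv lam that(1) by unfold_locales auto
    show ?thesis by (rule gap)
  qed
  have cp0: "cp \<noteq> 0"
  proof
    assume "cp = 0"
    hence "yq a (lam - 1) l = 0" using root_iff[of "lam - 1"] by simp
    with lam(2)[rule_format, of "lam - 1"] show False by simp
  qed
  define R where "R t = {z. poly cp z = 0 \<and> z \<in> \<real> \<and> Re z \<le> t}" for t
  have finR: "finite (R t)" for t
    using poly_roots_finite[OF cp0] unfolding R_def by (rule finite_subset[rotated]) auto
  have Rmem: "z \<in> R t \<longleftrightarrow> (\<exists>x. z = of_real x \<and> yq a x l = 0 \<and> x \<le> t)" for z t
  proof
    assume "z \<in> R t"
    then obtain x where "z = of_real x" "poly cp z = 0" "Re z \<le> t" unfolding R_def
      by (auto elim: Reals_cases)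
    then show "\<exists>x. z = of_real x \<and> yq a x l = 0 \<and> x \<le> t" using root_iff by auto
  next
    assume "\<exists>x. z = of_real x \<and> yq a x l = 0 \<and> x \<le> t"
    then show "z \<in> R t" unfolding R_def using root_iff by auto
  qed
  have count: "eig_count H t = card (R t)" for t
  proof -
    have "eig_count H t = (\<Sum>z\<in>R t. order z cp)" unfolding eig_count_def R_def cp_def by simp
    also have "\<dots> = (\<Sum>z\<in>R t. 1)"
    proof (rule sum.cong)
      fix z assume "z \<in> R t"
      then obtain x where x: "z = of_real x" "yq a x l = 0" using Rmem by auto
      show "order z cp = 1" unfolding x(1) cpP by (rule order_Pp_real) (use l2 x in auto)
    qed simp
    finally show ?thesis by simp
  qed
  have S1a: "t \<ge> lam" if "eig_count H t \<ge> 1" for t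
  proof -
    have "R t \<noteq> {}" using count[of t] that by auto
    then obtain z where "z \<in> R t" by auto
    then obtain x where "yq a x l = 0" "x \<le> t" using Rmem by auto
    then show "t \<ge> lam" using root_ge by force
  qed
  have S1b: "eig_count H t \<ge> 1" if "t \<ge> lam" for t
  proof -
    have "of_real lam \<in> R t" using Rmem lam(1) that by auto
    hence "R t \<noteq> {}" by auto
    hence "card (R t) \<ge> 1" using finR[of t] by (simp add: Suc_le_eq card_gt_0_iff)
    then show ?thesis using count by simp
  qed
  have S1: "{t. eig_count H t \<ge> 1} = {lam..}" using S1a S1b by auto
  have k1: "kth_eig H 1 = lam" unfolding kth_eig_def S1 by simp
  have S2ne: "beta \<in> {t. eig_count H t \<ge> 2}"
  proof -
    have "{of_real lam, of_real beta} \<subseteq> R beta" using Rmem lam(1) broot lb by auto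
    hence "card {complex_of_real lam, of_real beta} \<le> card (R beta)" using finR by (rule card_mono[rotated])
    moreover have "card {complex_of_real lam, of_real beta} = 2" using bl by simp
    ultimately show ?thesis using count by simp
  qed
  have S2lb: "t \<ge> lam + 1 / (real l)^2" if "t \<in> {t. eig_count H t \<ge> 2}" for t
  proof -
    have c2: "card (R t) \<ge> 2" using that count by simp
    have "\<exists>z\<in>R t. z \<noteq> of_real lam"
    proof (rule ccontr)
      assume "\<not> ?thesis"
      hence "R t \<subseteq> {of_real lam}" by auto
      hence "card (R t) \<le> 1" by (metis card.empty card_mono card_1_singleton_iff finite.intros le_zero_eq
            linorder_linear subset_singletonD insert_not_empty One_nat_def card.insert finite.emptyI)
      with c2 show False by simp
    qed
    then obtain z where "z \<in> R t" "z \<noteq> of_real lam" by auto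
    then obtain x where x: "z = of_real x" "yq a x l = 0" "x \<le> t" using Rmem by auto
    have "x \<noteq> lam" using x \<open>z \<noteq> of_real lam\<close> by auto
    then have "x - lam \<ge> 1 / (real l)^2" using gapr x(2) by auto
    then show ?thesis using x by simp
  qed
  have k2: "kth_eig H 2 \<ge> lam + 1 / (real l)^2"
    unfolding kth_eig_def by (rule cInf_greatest) (use S2ne S2lb in auto)
  have oscnn: "osc l W \<ge> 0"
  proof -
    have "Min (W ` {..<l}) \<le> W 0" using l2 by (intro Min_le) auto
    also have "W 0 \<le> Max (W ` {..<l})" using l2 by (intro Max_ge) auto
    finally show ?thesis unfolding osc_def by simp
  qed
  have lpos: "(real l)^2 > 0" using l2 by simp
  have "1 / (2 * (osc l W + 2) * (real l)\<^sup>2) \<le> 1 / (real l)^2"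
    using oscnn lpos by (intro divide_left_mono mult_right_mono) (auto intro: mult_pos_pos)
  also have "\<dots> \<le> kth_eig H 2 - kth_eig H 1" using k1 k2 by simp
  finally show ?thesis unfolding H_def .
qed

end
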